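(* Let $c$ be a prefix equivariant statistic, $N\ge1$ and $\theta>0$. Then there exists $k\in\{0,1,\dots,N-1\}$ such that, in the weighted game of best choice defined by $c$ and $\theta$, the positional strategy with parameter $k$ maximizes the probability of winning among all strategies.
   Context: Permutations of $\{1,\dots,m\}$ are written in one-line notation; $\mathfrak S_m$ is the set of all of them. An entry $\pi_j$ is a left-to-right maximum of $\pi$ if $\pi_j>\pi_i$ for all $i<j$. A statistic is a function $c:\bigcup_{m=1}^N\mathfrak S_m\to\mathbb Z_{\ge0}$. The weighted game of best choice is played as follows. A permutation $\pi\in\mathfrak S_N$ is chosen with probability $\theta^{c(\pi)}/\sum_{\sigma\in\mathfrak S_N}\theta^{c(\sigma)}$. For $i=1,\dots,N$, the player sees $\pi^{(i)}$, the unique element of $\mathfrak S_i$ with the same relative order as $\pi_1,\dots,\pi_i$. Based only on this, the player accepts candidate $i$ (ending the game) or rejects it; candidate $N$ is accepted if all earlier ones were rejected. The player wins iff the accepted candidate $i$ has $\pi_i=N$. A strategy is any such decision rule. The positional strategy with parameter $k$ rejects candidates $1,\dots,k$ and accepts the first candidate $i>k$ such that $\pi_i$ is a left-to-right maximum of $\pi$. Let $e_k=12\cdots k$. For $q\in\mathfrak S_k$ and $\pi\in\mathfrak S_m$ ($k\le m\le N$) with $\pi_1<\cdots<\pi_k$, $\sigma_q\cdot\pi\in\mathfrak S_m$ is given by $(\sigma_q\cdot\pi)_i=\pi_{q_i}$ for $i\le k$ and $(\sigma_q\cdot\pi)_i=\pi_i$ for $i>k$. The statistic $c$ is prefix equivariant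 if $c(\pi)-c(\sigma_q\cdot\pi)=c(e_k)-c(q)$ for all such $k,q,\pi$. Examples include the number of left-to-right maxima and the number of inversions. *)

theory Defs
  imports Complex_Main "HOL-Combinatorics.Multiset_Permutations"
begin

definition Sym :: "nat \<Rightarrow> nat list set" where
  "Sym m = permutations_of_set {1..m}"

definition idperm :: "nat \<Rightarrow> nat list" where
  "idperm k = [1..<Suc k]"

text \<open>Standardization: the unique permutation with the same relative order
  as a list of distinct numbers (so std (take i pi) is pi^(i)).\<close>
definition std :: "nat list \<Rightarrow> nat list" where
  "std xs = map (\<lambda>x. card {y \<in> set xs. y \<le> x}) xs"

text \<open>The action sigma_q . pi: permute the first k = length q entries by q.\<close>
definition act :: "nat list \<Rightarrow> nat list \<Rightarrow> nat list" where
  "act q p = map (\<lambda>i. p ! (q ! i - 1)) [0..<length q] @ drop (length q) p"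

definition prefix_equivariant :: "nat \<Rightarrow> (nat list \<Rightarrow> nat) \<Rightarrow> bool" where
  "prefix_equivariant N c \<longleftrightarrow>
     (\<forall>k m q p. 1 \<le> k \<and> k \<le> m \<and> m \<le> N \<and> q \<in> Sym k \<and> p \<in> Sym m \<and>
        sorted_wrt (<) (take k p) \<longrightarrow>
        int (c p) - int (c (act q p)) = int (c (idperm k)) - int (c q))"

text \<open>A (deterministic) strategy is a decision rule on the observed pattern
  pi^(i): True = accept candidate i.  The candidate accepted for pi in S_N is
  the first i < N whose pattern is accepted, and N otherwise.\<close>
type_synonym strategy = "nat list \<Rightarrow> bool"

definition stop_time :: "nat \<Rightarrow> strategy \<Rightarrow> nat list \<Rightarrow> nat" where
  "stop_time N s p = Min ({i \<in> {1..<N}. s (std (take i p))} \<union> {N})"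

definition wins :: "nat \<Rightarrow> strategy \<Rightarrow> nat list \<Rightarrow> bool" where
  "wins N s p \<longleftrightarrow> p ! (stop_time N s p - 1) = N"

definition win_prob :: "(nat list \<Rightarrow> nat) \<Rightarrow> real \<Rightarrow> nat \<Rightarrow> strategy \<Rightarrow> real" where
  "win_prob c \<theta> N s =
     (\<Sum>p\<in>{p \<in> Sym N. wins N s p}. \<theta> ^ c p) / (\<Sum>p\<in>Sym N. \<theta> ^ c p)"

definition last_is_lr_max :: "nat list \<Rightarrow> bool" where
  "last_is_lr_max xs \<longleftrightarrow> xs \<noteq> [] \<and> (\<forall>j < length xs - 1. xs ! j < last xs)"

text \<open>Positional strategy with parameter k: reject candidates 1..k, then accept
  the first candidate i > k that is a left-to-right maximum.\<close>
definition positional :: "nat \<Rightarrow> strategy" where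
  "positional k \<sigma> \<longleftrightarrow> k < length \<sigma> \<and> last_is_lr_max \<sigma>"

end

theory Submission
  imports Defs
begin

definition rk :: "nat list \<Rightarrow> nat \<Rightarrow> nat" where
  "rk xs x = card {y \<in> set xs. y \<le> x}"

lemma std_rk: "std xs = map (rk xs) xs"
  by (simp add: std_def rk_def)

lemma rk_strict_mono: "strict_mono_on (set xs) (rk xs)"
proof (rule strict_mono_onI)
  fix a b assume "a \<in> set xs" "b \<in> set xs" "a < b"
  then have "{y \<in> set xs. y \<le> a} \<subseteq> {y \<in> set xs. y \<le> b}" "b \<in> {y \<in> set xs. y \<le> b}" "b \<notin> {y \<in> set xs. y \<le> a}" by auto
  then have "{y \<in> set xs. y \<le> a} \<subset> {y \<in> set xs. y \<le> b}" by blast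
  then show "rk xs a < rk xs b" unfolding rk_def by (intro psubset_card_mono) auto
qed

lemma rk_range: "x \<in> set xs \<Longrightarrow> rk xs x \<in> {1..length (remdups xs)}"
proof -
  assume x: "x \<in> set xs"
  have "x \<in> {y \<in> set xs. y \<le> x}" using x by auto
  then have "0 < card {y \<in> set xs. y \<le> x}" by (subst card_gt_0_iff) auto
  then have "1 \<le> rk xs x" unfolding rk_def by simp
  moreover have "rk xs x \<le> card (set xs)" unfolding rk_def by (intro card_mono) auto
  ultimately show ?thesis by (simp add: length_remdups_card_conv)
qed

lemma Sym_iff: "q \<in> Sym k \<longleftrightarrow> distinct q \<and> set q = {1..k}"
  by (auto simp: Sym_def permutations_of_set_def)

lemma std_Sym: "distinct xs \<Longrightarrow> std xs \<in> Sym (length xs)"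
proof -
  assume d: "distinct xs"
  have inj: "inj_on (rk xs) (set xs)" using rk_strict_mono strict_mono_on_imp_inj_on by blast
  have sub: "rk xs ` set xs \<subseteq> {1..length xs}"
  proof
    fix z assume "z \<in> rk xs ` set xs"
    then obtain x where "x \<in> set xs" "z = rk xs x" by auto
    then show "z \<in> {1..length xs}" using rk_range[of x xs] d by (simp add: distinct_remdups_id)
  qed
  have "card (rk xs ` set xs) = length xs" using inj d by (simp add: card_image distinct_card)
  then have eq: "rk xs ` set xs = {1..length xs}" using sub by (intro card_subset_eq) auto
  have "distinct (map (rk xs) xs)" using inj d by (simp add: distinct_map)
  moreover have "set (map (rk xs) xs) = {1..length xs}" using eq by simp
  ultimately show ?thesis unfolding Sym_iff std_rk by simp
qed

lemma length_std[simp]: "length (std xs) = length xs"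
  by (simp add: std_def)

lemma std_nth_less: "i < length xs \<Longrightarrow> j < length xs \<Longrightarrow> (std xs ! i < std xs ! j) = (xs ! i < xs ! j)"
  unfolding std_rk using rk_strict_mono[of xs] by (simp add: strict_mono_on_less)

lemma std_map_mono:
  assumes "strict_mono_on (set ys) f"
  shows "std (map f ys) = std ys"
proof -
  have "\<And>z. z \<in> set ys \<Longrightarrow> card {y \<in> f ` set ys. y \<le> f z} = card {y \<in> set ys. y \<le> z}"
  proof -
    fix z assume z: "z \<in> set ys"
    have "{y \<in> f ` set ys. y \<le> f z} = f ` {y \<in> set ys. y \<le> z}"
      using z strict_mono_on_less_eq[OF assms] by auto
    moreover have "inj_on f {y \<in> set ys. y \<le> z}"
      using strict_mono_on_imp_inj_on[OF assms] by (rule inj_on_subset) auto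
    ultimately show "card {y \<in> f ` set ys. y \<le> f z} = card {y \<in> set ys. y \<le> z}"
      by (simp add: card_image)
  qed
  then show ?thesis unfolding std_def by simp
qed

lemma std_take_std:
  assumes "j \<le> length xs"
  shows "std (take j (std xs)) = std (take j xs)"
proof -
  have "take j (std xs) = map (rk xs) (take j xs)" by (simp add: std_rk take_map)
  moreover have "strict_mono_on (set (take j xs)) (rk xs)"
    using rk_strict_mono[of xs] set_take_subset[of j xs] by (auto intro!: strict_mono_onI dest: strict_mono_onD)
  ultimately show ?thesis by (simp add: std_map_mono)
qed


lemma Sym_length: "q \<in> Sym k \<Longrightarrow> length q = k"
proof -
  assume q: "q \<in> Sym k"
  then have "distinct q" "set q = {1..k}" by (auto simp: Sym_iff)
  then show ?thesis using distinct_card[of q] by simp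
qed

lemma std_Sym_id: "q \<in> Sym k \<Longrightarrow> std q = q"
proof -
  assume q: "q \<in> Sym k"
  have "\<And>x. x \<in> set q \<Longrightarrow> card {y \<in> set q. y \<le> x} = x"
  proof -
    fix x assume "x \<in> set q"
    then have "{y \<in> set q. y \<le> x} = {1..x}" using q by (auto simp: Sym_iff)
    then show "card {y \<in> set q. y \<le> x} = x" by simp
  qed
  then show ?thesis unfolding std_def by (simp add: map_idI)
qed


lemma act_eq: "act q p = map (\<lambda>j. p ! (j - 1)) q @ drop (length q) p"
proof -
  have "map (\<lambda>i. p ! (q ! i - 1)) [0..<length q] = map (\<lambda>j. p ! (j - 1)) q"
    by (rule nth_equalityI) auto
  then show ?thesis by (simp add: act_def)
qed

lemma img_shift: "k \<le> length p \<Longrightarrow> (\<lambda>j. p ! (j - 1)) ` {1..k} = set (take k p)"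
proof -
  assume k: "k \<le> length p"
  have "(\<lambda>j. j - 1) ` {1..k} = {0..<k}"
  proof
    show "(\<lambda>j. j - 1) ` {1..k} \<subseteq> {0..<k}" by auto
    show "{0..<k} \<subseteq> (\<lambda>j. j - 1) ` {1..k}"
    proof
      fix i assume "i \<in> {0..<k}"
      then have "Suc i \<in> {1..k}" "i = Suc i - 1" by auto
      then show "i \<in> (\<lambda>j. j - 1) ` {1..k}" by blast
    qed
  qed
  then have "(\<lambda>j. p ! (j - 1)) ` {1..k} = nth p ` {0..<k}" by (metis image_image)
  then show ?thesis using nth_image[OF k] by simp
qed

lemma inj_shift: "distinct p \<Longrightarrow> k \<le> length p \<Longrightarrow> inj_on (\<lambda>j. p ! (j - 1)) {1..k}"
proof (rule inj_onI)
  fix a b assume d: "distinct p" and k: "k \<le> length p" and a: "a \<in> {1..k}" and b: "b \<in> {1..k}"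
    and e: "p ! (a - 1) = p ! (b - 1)"
  then have "a - 1 = b - 1" using nth_eq_iff_index_eq[OF d, of "a - 1" "b - 1"] by auto
  then show "a = b" using a b by auto
qed

lemma act_props:
  assumes q: "q \<in> Sym k" and p: "p \<in> Sym m" and km: "k \<le> m"
  shows "act q p \<in> Sym m" "take k (act q p) = map (\<lambda>j. p ! (j - 1)) q"
    "drop k (act q p) = drop k p" "set (take k (act q p)) = set (take k p)"
proof -
  have lq: "length q = k" using Sym_length[OF q] .
  have lp: "length p = m" using Sym_length[OF p] .
  have dp: "distinct p" and sp: "set p = {1..m}" using p by (auto simp: Sym_iff)
  have dq: "distinct q" and sq: "set q = {1..k}" using q by (auto simp: Sym_iff)
  have e: "act q p = map (\<lambda>j. p ! (j - 1)) q @ drop k p" using act_eq lq by simp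
  show t: "take k (act q p) = map (\<lambda>j. p ! (j - 1)) q" unfolding e using lq by simp
  show "drop k (act q p) = drop k p" unfolding e using lq by simp
  have st: "set (map (\<lambda>j. p ! (j - 1)) q) = set (take k p)"
    using img_shift[of k p] lp km sq by simp
  then show "set (take k (act q p)) = set (take k p)" unfolding t .
  have dm: "distinct (map (\<lambda>j. p ! (j - 1)) q)"
    using dq inj_shift[OF dp, of k] lp km sq by (simp add: distinct_map)
  have disj: "set (take k p) \<inter> set (drop k p) = {}" using set_take_disj_set_drop_if_distinct[OF dp] by simp
  have "distinct (act q p)" unfolding e using dm disj st dp by auto
  moreover have "set (act q p) = {1..m}" unfolding e using st sp
    by (metis append_take_drop_id set_append)
  ultimately show "act q p \<in> Sym m" by (simp add: Sym_iff)
qed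

lemma act_std:
  assumes q: "q \<in> Sym k" and p: "p \<in> Sym m" and km: "k \<le> m"
    and srt: "sorted_wrt (<) (take k p)"
  shows "std (take k (act q p)) = q"
proof -
  have lp: "length p = m" using Sym_length[OF p] .
  have sq: "set q = {1..k}" using q by (auto simp: Sym_iff)
  have "strict_mono_on (set q) (\<lambda>j. p ! (j - 1))"
  proof (rule strict_mono_onI)
    fix a b assume "a \<in> set q" "b \<in> set q" "a < b"
    then have ab: "a - 1 < b - 1" "b - 1 < length (take k p)" using sq lp km by auto
    have "take k p ! (a - 1) < take k p ! (b - 1)" using sorted_wrt_nth_less[OF srt ab] .
    then show "p ! (a - 1) < p ! (b - 1)" using ab by simp
  qed
  then show ?thesis using act_props(2)[OF q p km] std_map_mono std_Sym_id[OF q] by simp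
qed

lemma rank_sorted:
  fixes zs :: "nat list"
  assumes s: "sorted_wrt (<) zs" and t: "t < length zs"
  shows "card {z \<in> set zs. z \<le> zs ! t} = Suc t"
proof -
  have d: "distinct zs" using s strict_sorted_iff by blast
  have "{z \<in> set zs. z \<le> zs ! t} = nth zs ` {0..t}"
  proof
    show "{z \<in> set zs. z \<le> zs ! t} \<subseteq> nth zs ` {0..t}"
    proof
      fix z assume z: "z \<in> {z \<in> set zs. z \<le> zs ! t}"
      then have zin: "z \<in> set zs" and zle: "z \<le> zs ! t" by auto
      from zin obtain a where a: "a < length zs" "z = zs ! a" by (auto simp: in_set_conv_nth)
      have "a \<le> t"
      proof (rule ccontr)
        assume na: "\<not> a \<le> t"
        have "zs ! t < zs ! a" using sorted_wrt_nth_less[OF s, of t a] a(1) na by simp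
        then show False using zle a(2) by simp
      qed
      then show "z \<in> nth zs ` {0..t}" using a(2) by auto
    qed
    show "nth zs ` {0..t} \<subseteq> {z \<in> set zs. z \<le> zs ! t}"
    proof
      fix z assume "z \<in> nth zs ` {0..t}"
      then obtain a where a: "a \<le> t" "z = zs ! a" by auto
      have "zs ! a \<le> zs ! t"
      proof (cases "a = t")
        case False
        then have "a < t" using a(1) by simp
        then show ?thesis using sorted_wrt_nth_less[OF s, of a t] t by simp
      qed simp
      moreover have "zs ! a \<in> set zs" using a(1) t by simp
      ultimately show "z \<in> {z \<in> set zs. z \<le> zs ! t}" using a(2) by simp
    qed
  qed
  moreover have "inj_on (nth zs) {0..t}" using d t by (intro inj_on_nth) auto
  ultimately show ?thesis by (simp add: card_image)
qed

definition Tset :: "nat \<Rightarrow> nat \<Rightarrow> nat list set" where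
  "Tset N k = {p \<in> Sym N. sorted_wrt (<) (take k p)}"

lemma act_bij:
  assumes kN: "k \<le> N"
  shows "bij_betw (\<lambda>(p, q). act q p) (Tset N k \<times> Sym k) (Sym N)"
proof (rule bij_betw_imageI)
  show "inj_on (\<lambda>(p, q). act q p) (Tset N k \<times> Sym k)"
  proof (rule inj_onI, clarify)
    fix p q p' q' assume p: "p \<in> Tset N k" and q: "q \<in> Sym k" and p': "p' \<in> Tset N k" and q': "q' \<in> Sym k"
      and e: "act q p = act q' p'"
    have pS: "p \<in> Sym N" and ps: "sorted_wrt (<) (take k p)" using p by (auto simp: Tset_def)
    have pS': "p' \<in> Sym N" and ps': "sorted_wrt (<) (take k p')" using p' by (auto simp: Tset_def)
    show "p = p' \<and> q = q'"
    proof
      show "q = q'" using act_std[OF q pS kN ps] act_std[OF q' pS' kN ps'] e by simp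
      have "set (take k p) = set (take k p')" using act_props(4)[OF q pS kN] act_props(4)[OF q' pS' kN] e by simp
      then have "take k p = take k p'" using ps ps' by (intro sorted_distinct_set_unique) (auto simp: strict_sorted_iff)
      moreover have "drop k p = drop k p'" using act_props(3)[OF q pS kN] act_props(3)[OF q' pS' kN] e by simp
      ultimately show "p = p'" by (metis append_take_drop_id)
    qed
  qed
  show "(\<lambda>(p, q). act q p) ` (Tset N k \<times> Sym k) = Sym N"
  proof
    show "(\<lambda>(p, q). act q p) ` (Tset N k \<times> Sym k) \<subseteq> Sym N"
      using act_props(1) kN by (auto simp: Tset_def)
    show "Sym N \<subseteq> (\<lambda>(p, q). act q p) ` (Tset N k \<times> Sym k)"
    proof
      fix x assume x: "x \<in> Sym N"
      have lx: "length x = N" using Sym_length[OF x] .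
      have dx: "distinct x" and sx: "set x = {1..N}" using x by (auto simp: Sym_iff)
      define ys where "ys = take k x"
      define zs where "zs = sort ys"
      define p where "p = zs @ drop k x"
      define q where "q = std ys"
      have ly: "length ys = k" using lx kN by (simp add: ys_def)
      have dy: "distinct ys" using dx by (simp add: ys_def)
      have zset: "set zs = set ys" and lz: "length zs = k" using ly by (simp_all add: zs_def)
      have zsrt: "sorted_wrt (<) zs" using dy by (simp add: zs_def strict_sorted_iff)
      have q: "q \<in> Sym k" using std_Sym[OF dy] ly by (simp add: q_def)
      have disj: "set ys \<inter> set (drop k x) = {}" using set_take_disj_set_drop_if_distinct[OF dx] by (simp add: ys_def)
      have "distinct p" using zsrt disj zset dx by (auto simp: p_def strict_sorted_iff)
      moreover have "set p = {1..N}" using zset sx by (metis append_take_drop_id p_def set_append ys_def)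
      ultimately have pS: "p \<in> Sym N" by (simp add: Sym_iff)
      have tp: "take k p = zs" using lz by (simp add: p_def)
      have pT: "p \<in> Tset N k" using pS tp zsrt by (simp add: Tset_def)
      have "act q p = map (\<lambda>j. p ! (j - 1)) q @ drop k p" using act_eq Sym_length[OF q] by simp
      also have "map (\<lambda>j. p ! (j - 1)) q = ys"
      proof -
        have "map (\<lambda>j. p ! (j - 1)) q = map (\<lambda>y. zs ! (rk ys y - 1)) ys"
        proof -
          have "\<And>y. y \<in> set ys \<Longrightarrow> p ! (rk ys y - 1) = zs ! (rk ys y - 1)"
          proof -
            fix y assume "y \<in> set ys"
            then have "rk ys y \<in> {1..k}" using rk_range[of y ys] dy ly by (simp add: distinct_remdups_id)
            then show "p ! (rk ys y - 1) = zs ! (rk ys y - 1)" using lz by (auto simp: p_def nth_append)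
          qed
          then show ?thesis by (simp add: q_def std_rk)
        qed
        also have "\<dots> = ys"
        proof (rule map_idI)
          fix y assume y: "y \<in> set ys"
          have "y \<in> set zs" using y zset by simp
          then obtain t where t: "t < length zs" "y = zs ! t" by (auto simp: in_set_conv_nth)
          have "rk ys y = Suc t" using rank_sorted[OF zsrt t(1)] t zset by (simp add: rk_def)
          then show "zs ! (rk ys y - 1) = y" using t by simp
        qed
        finally show ?thesis .
      qed
      finally have "act q p = x" by (simp add: p_def ys_def lz)
      then show "x \<in> (\<lambda>(p, q). act q p) ` (Tset N k \<times> Sym k)" using pT q by force
    qed
  qed
qed


definition PS :: "(nat list \<Rightarrow> nat) \<Rightarrow> real \<Rightarrow> nat \<Rightarrow> (nat list \<Rightarrow> bool) \<Rightarrow> real" where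
  "PS c \<theta> N P = (\<Sum>x\<in>{x \<in> Sym N. P x}. \<theta> ^ c x)"

lemma finite_Sym[simp]: "finite (Sym N)"
  by (simp add: Sym_def)

lemma PS_if: "PS c \<theta> N P = (\<Sum>x\<in>Sym N. if P x then \<theta> ^ c x else 0)"
  unfolding PS_def by (simp add: sum.inter_filter)

lemma PS_cong: "(\<And>x. x \<in> Sym N \<Longrightarrow> P x = Q x) \<Longrightarrow> PS c \<theta> N P = PS c \<theta> N Q"
  unfolding PS_if by (rule sum.cong) auto

lemma weight_act:
  fixes \<theta> :: real
  assumes pe: "prefix_equivariant N c" and k: "1 \<le> k" "k \<le> N" and q: "q \<in> Sym k" and p: "p \<in> Tset N k"
  shows "\<theta> ^ c (act q p) * \<theta> ^ c (idperm k) = \<theta> ^ c p * \<theta> ^ c q"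
proof -
  have "int (c p) - int (c (act q p)) = int (c (idperm k)) - int (c q)"
    using pe k q p unfolding prefix_equivariant_def Tset_def by blast
  then have "c (act q p) + c (idperm k) = c p + c q" by linarith
  then have "\<theta> ^ (c (act q p) + c (idperm k)) = \<theta> ^ (c p + c q)" by simp
  then show ?thesis by (simp only: power_add)
qed

lemma indep_core:
  assumes pe: "prefix_equivariant N c" and k: "1 \<le> k" "k \<le> N"
  shows "\<theta> ^ c (idperm k) * PS c \<theta> N (\<lambda>x. F (std (take k x)) \<and> H (set (take k x)) (drop k x))
    = (\<Sum>p\<in>Tset N k. if H (set (take k p)) (drop k p) then \<theta> ^ c p else 0)
      * (\<Sum>q\<in>Sym k. if F q then \<theta> ^ c q else 0)"
proof -
  let ?g = "\<lambda>x. if F (std (take k x)) \<and> H (set (take k x)) (drop k x) then \<theta> ^ c x else 0"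
  let ?E = "\<theta> ^ c (idperm k)"
  have "PS c \<theta> N (\<lambda>x. F (std (take k x)) \<and> H (set (take k x)) (drop k x)) = (\<Sum>x\<in>Sym N. ?g x)"
    by (simp add: PS_if)
  also have "\<dots> = (\<Sum>pq\<in>Tset N k \<times> Sym k. ?g ((\<lambda>(p, q). act q p) pq))"
    by (rule sum.reindex_bij_betw[symmetric]) (rule act_bij[OF k(2)])
  finally have e1: "PS c \<theta> N (\<lambda>x. F (std (take k x)) \<and> H (set (take k x)) (drop k x))
     = (\<Sum>pq\<in>Tset N k \<times> Sym k. ?g ((\<lambda>(p, q). act q p) pq))" .
  have pt: "?E * ?g (act q p) = (if H (set (take k p)) (drop k p) then \<theta> ^ c p else 0) * (if F q then \<theta> ^ c q else 0)"
    if p: "p \<in> Tset N k" and q: "q \<in> Sym k" for p q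
  proof -
    have pS: "p \<in> Sym N" and ps: "sorted_wrt (<) (take k p)" using p by (auto simp: Tset_def)
    have "std (take k (act q p)) = q" using act_std[OF q pS k(2) ps] .
    moreover have "set (take k (act q p)) = set (take k p)" using act_props(4)[OF q pS k(2)] .
    moreover have "drop k (act q p) = drop k p" using act_props(3)[OF q pS k(2)] .
    moreover have "\<theta> ^ c (act q p) * ?E = \<theta> ^ c p * \<theta> ^ c q" using weight_act[OF pe k q p] .
    ultimately show ?thesis by (auto simp: algebra_simps)
  qed
  have "?E * PS c \<theta> N (\<lambda>x. F (std (take k x)) \<and> H (set (take k x)) (drop k x))
      = (\<Sum>pq\<in>Tset N k \<times> Sym k. ?E * ?g ((\<lambda>(p, q). act q p) pq))"
    unfolding e1 by (simp add: sum_distrib_left)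
  also have "\<dots> = (\<Sum>(p,q)\<in>Tset N k \<times> Sym k. (if H (set (take k p)) (drop k p) then \<theta> ^ c p else 0) * (if F q then \<theta> ^ c q else 0))"
  proof (rule sum.cong)
    fix pq assume "pq \<in> Tset N k \<times> Sym k"
    then obtain p q where pq: "pq = (p, q)" "p \<in> Tset N k" "q \<in> Sym k" by auto
    show "?E * ?g ((\<lambda>(p, q). act q p) pq) = (case pq of (p, q) \<Rightarrow> (if H (set (take k p)) (drop k p) then \<theta> ^ c p else 0) * (if F q then \<theta> ^ c q else 0))"
      unfolding pq(1) using pt[OF pq(2,3)] by (simp only: prod.case)
  qed simp
  also have "\<dots> = (\<Sum>p\<in>Tset N k. \<Sum>q\<in>Sym k. (if H (set (take k p)) (drop k p) then \<theta> ^ c p else 0) * (if F q then \<theta> ^ c q else 0))"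
    by (rule sum.cartesian_product[symmetric])
  also have "\<dots> = (\<Sum>p\<in>Tset N k. if H (set (take k p)) (drop k p) then \<theta> ^ c p else 0)
      * (\<Sum>q\<in>Sym k. if F q then \<theta> ^ c q else 0)"
    by (simp add: sum_product)
  finally show ?thesis .
qed

lemma indep:
  assumes pe: "prefix_equivariant N c" and k: "1 \<le> k" "k \<le> N" and th: "0 < \<theta>"
  shows "PS c \<theta> N (\<lambda>x. F (std (take k x)) \<and> H (set (take k x)) (drop k x)) * PS c \<theta> N (\<lambda>_. True)
    = PS c \<theta> N (\<lambda>x. F (std (take k x))) * PS c \<theta> N (\<lambda>x. H (set (take k x)) (drop k x))"
proof -
  let ?E = "\<theta> ^ c (idperm k)"
  let ?B = "\<lambda>H. (\<Sum>p\<in>Tset N k. if H (set (take k p)) (drop k p) then \<theta> ^ c p else 0)"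
  let ?A = "\<lambda>F. (\<Sum>q\<in>Sym k. if F q then \<theta> ^ c q else 0)"
  have E0: "?E \<noteq> 0" using th by simp
  have 1: "?E * PS c \<theta> N (\<lambda>x. F (std (take k x)) \<and> H (set (take k x)) (drop k x)) = ?B H * ?A F"
    by (rule indep_core[OF pe k])
  have 2: "?E * PS c \<theta> N (\<lambda>_. True) = ?B (\<lambda>_ _. True) * ?A (\<lambda>_. True)"
    using indep_core[OF pe k, of \<theta> "\<lambda>_. True" "\<lambda>_ _. True"] by simp
  have 3: "?E * PS c \<theta> N (\<lambda>x. F (std (take k x))) = ?B (\<lambda>_ _. True) * ?A F"
    using indep_core[OF pe k, of \<theta> F "\<lambda>_ _. True"] by simp
  have 4: "?E * PS c \<theta> N (\<lambda>x. H (set (take k x)) (drop k x)) = ?B H * ?A (\<lambda>_. True)"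
    using indep_core[OF pe k, of \<theta> "\<lambda>_. True" H] by simp
  have "(?E * PS c \<theta> N (\<lambda>x. F (std (take k x)) \<and> H (set (take k x)) (drop k x))) * (?E * PS c \<theta> N (\<lambda>_. True))
     = (?E * PS c \<theta> N (\<lambda>x. F (std (take k x)))) * (?E * PS c \<theta> N (\<lambda>x. H (set (take k x)) (drop k x)))"
    unfolding 1 2 3 4 by (simp add: algebra_simps)
  then have "(?E * ?E) * (PS c \<theta> N (\<lambda>x. F (std (take k x)) \<and> H (set (take k x)) (drop k x)) * PS c \<theta> N (\<lambda>_. True))
     = (?E * ?E) * (PS c \<theta> N (\<lambda>x. F (std (take k x))) * PS c \<theta> N (\<lambda>x. H (set (take k x)) (drop k x)))"
    by (simp only: ac_simps)
  moreover have "?E * ?E \<noteq> 0" using E0 by simp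
  ultimately show ?thesis by (rule mult_left_cancel[THEN iffD1, rotated])
qed


function vf :: "nat \<Rightarrow> (nat\<Rightarrow>real) \<Rightarrow> (nat\<Rightarrow>real) \<Rightarrow> nat \<Rightarrow> real" where
"vf N r S i = (if N \<le> i then r N * S N else max (vf N r S (Suc i)) (r i * S i + (1 - r i) * vf N r S (Suc i)))"
  by pat_completeness auto
termination by (relation "measure (\<lambda>(N,r,S,i). N - i)") auto

function pvf :: "nat \<Rightarrow> (nat\<Rightarrow>real) \<Rightarrow> (nat\<Rightarrow>real) \<Rightarrow> nat \<Rightarrow> real" where
"pvf N r S i = (if N \<le> i then r N * S N else r i * S i + (1 - r i) * pvf N r S (Suc i))"
  by pat_completeness auto
termination by (relation "measure (\<lambda>(N,r,S,i). N - i)") auto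

declare vf.simps[simp del] pvf.simps[simp del]

lemma vf_ge: "N \<le> i \<Longrightarrow> vf N r S i = r N * S N"
  by (subst vf.simps) simp
lemma vf_lt: "i < N \<Longrightarrow> vf N r S i = max (vf N r S (Suc i)) (r i * S i + (1 - r i) * vf N r S (Suc i))"
  by (subst vf.simps) simp
lemma wf_ge: "N \<le> i \<Longrightarrow> pvf N r S i = r N * S N"
  by (subst pvf.simps) simp
lemma wf_lt: "i < N \<Longrightarrow> pvf N r S i = r i * S i + (1 - r i) * pvf N r S (Suc i)"
  by (subst pvf.simps) simp

lemma vf_nonneg:
  assumes "\<forall>j. 0 \<le> r j \<and> r j \<le> 1 \<and> 0 \<le> S j"
  shows "0 \<le> vf N r S i"
proof (induction "N - i" arbitrary: i rule: less_induct)
  case (less i)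
  show ?case
  proof (cases "N \<le> i")
    case True
    have "0 \<le> r N * S N" using assms by simp
    then show ?thesis using True by (simp add: vf_ge)
  next
    case False
    then have "0 \<le> vf N r S (Suc i)" using less by simp
    then show ?thesis using False by (simp add: vf_lt)
  qed
qed

lemma vf_bound:
  assumes rs: "\<forall>j. 0 \<le> r j \<and> r j \<le> 1 \<and> 0 \<le> S j"
    and a0: "\<forall>j\<in>{1..N}. 0 \<le> a j" and u0: "\<forall>j\<in>{1..N}. 0 \<le> u j"
    and ar: "\<forall>j\<in>{1..N}. a j \<le> r j * u j"
    and ua: "\<forall>j\<in>{1..<N}. u (Suc j) \<le> u j - a j"
  shows "1 \<le> i \<Longrightarrow> i \<le> N \<Longrightarrow> (\<Sum>j=i..N. S j * a j) \<le> u i * vf N r S i"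
proof (induction "N - i" arbitrary: i rule: less_induct)
  case (less i)
  show ?case
  proof (cases "N \<le> i")
    case True
    then have iN: "i = N" using less by simp
    have "S N * a N \<le> S N * (r N * u N)" using rs ar less iN by (auto intro!: mult_left_mono)
    then show ?thesis using iN by (simp add: vf_ge algebra_simps)
  next
    case False
    let ?v = "vf N r S (Suc i)"
    have IH: "(\<Sum>j=Suc i..N. S j * a j) \<le> u (Suc i) * ?v"
      using less.hyps[of "Suc i"] less.prems False by auto
    have v0: "0 \<le> ?v" using vf_nonneg[OF rs] .
    have vi: "vf N r S i = max ?v (r i * S i + (1 - r i) * ?v)" using False by (simp add: vf_lt)
    have ui: "0 \<le> u i" using u0 less by auto
    have "(\<Sum>j=i..N. S j * a j) = S i * a i + (\<Sum>j=Suc i..N. S j * a j)"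
      using less by (simp add: sum.atLeast_Suc_atMost)
    also have "\<dots> \<le> S i * a i + u (Suc i) * ?v" using IH by simp
    also have "\<dots> \<le> S i * a i + (u i - a i) * ?v"
      using ua less False v0 by (auto intro!: mult_right_mono)
    also have "\<dots> = a i * (S i - ?v) + u i * ?v" by (simp add: algebra_simps)
    also have "\<dots> \<le> u i * vf N r S i"
    proof (cases "S i \<ge> ?v")
      case True
      have "a i * (S i - ?v) \<le> (r i * u i) * (S i - ?v)"
        using ar less True by (auto intro!: mult_right_mono)
      moreover have "(r i * u i) * (S i - ?v) + u i * ?v = u i * (r i * S i + (1 - r i) * ?v)"
        by (simp add: algebra_simps)
      moreover have "u i * (r i * S i + (1 - r i) * ?v) \<le> u i * vf N r S i"
        unfolding vi using ui by (intro mult_left_mono) auto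
      ultimately show ?thesis by linarith
    next
      case False2: False
      have "a i * (S i - ?v) \<le> 0" using a0 less False2 by (auto intro!: mult_nonneg_nonpos)
      moreover have "u i * ?v \<le> u i * vf N r S i"
        unfolding vi using ui by (intro mult_left_mono) auto
      ultimately show ?thesis by linarith
    qed
    finally show ?thesis .
  qed
qed

lemma wf_exact:
  assumes ar: "\<forall>j\<in>{i0..N}. a j = r j * u j"
    and ua: "\<forall>j\<in>{i0..<N}. u (Suc j) = u j - a j"
  shows "i0 \<le> i \<Longrightarrow> i \<le> N \<Longrightarrow> (\<Sum>j=i..N. S j * a j) = u i * pvf N r S i"
proof (induction "N - i" arbitrary: i rule: less_induct)
  case (less i)
  show ?case
  proof (cases "N \<le> i")
    case True
    then have iN: "i = N" using less by simp
    have "a N = r N * u N" using ar less iN by auto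
    then show ?thesis using iN by (simp add: wf_ge algebra_simps)
  next
    case False
    have IH: "(\<Sum>j=Suc i..N. S j * a j) = u (Suc i) * pvf N r S (Suc i)"
      using less.hyps[of "Suc i"] less.prems False by auto
    have ai: "a i = r i * u i" using ar less False by auto
    have us: "u (Suc i) = u i - a i" using ua less False by auto
    have "(\<Sum>j=i..N. S j * a j) = S i * a i + (\<Sum>j=Suc i..N. S j * a j)"
      using less by (simp add: sum.atLeast_Suc_atMost)
    also have "\<dots> = u i * pvf N r S i"
    proof -
      have wi: "pvf N r S i = r i * S i + (1 - r i) * pvf N r S (Suc i)" using False by (simp add: wf_lt)
      show ?thesis unfolding IH us wi ai by (simp add: algebra_simps)
    qed
    finally show ?thesis .
  qed
qed

lemma vf_wf_A:
  assumes rs: "\<forall>j. 0 \<le> r j \<and> r j \<le> 1 \<and> 0 \<le> S j"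
    and Smono: "\<forall>j. S j \<le> S (Suc j)"
  shows "i < N \<Longrightarrow> vf N r S (Suc i) \<le> S i \<Longrightarrow> vf N r S (Suc i) = pvf N r S (Suc i)"
proof (induction "N - i" arbitrary: i rule: less_induct)
  case (less i)
  show ?case
  proof (cases "Suc i = N")
    case True then show ?thesis by (simp add: vf_ge wf_ge)
  next
    case False
    then have lt: "Suc i < N" using less by simp
    have vs: "vf N r S (Suc i) = max (vf N r S (Suc (Suc i))) (r (Suc i) * S (Suc i) + (1 - r (Suc i)) * vf N r S (Suc (Suc i)))"
      using lt by (rule vf_lt)
    have le: "vf N r S (Suc (Suc i)) \<le> vf N r S (Suc i)" unfolding vs by simp
    have S2: "vf N r S (Suc (Suc i)) \<le> S (Suc i)" using le less.prems Smono[rule_format, of i] by linarith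
    have IH: "vf N r S (Suc (Suc i)) = pvf N r S (Suc (Suc i))"
      using less.hyps[of "Suc i"] lt S2 by auto
    have r: "0 \<le> r (Suc i)" using rs by auto
    have "r (Suc i) * vf N r S (Suc (Suc i)) \<le> r (Suc i) * S (Suc i)" using S2 r by (rule mult_left_mono)
    then have "vf N r S (Suc i) = r (Suc i) * S (Suc i) + (1 - r (Suc i)) * vf N r S (Suc (Suc i))"
      unfolding vs by (simp add: algebra_simps max_def)
    then show ?thesis using IH lt by (simp add: wf_lt)
  qed
qed

lemma vf_wf_B:
  assumes rs: "\<forall>j. 0 \<le> r j \<and> r j \<le> 1 \<and> 0 \<le> S j"
    and Smono: "\<forall>j. S j \<le> S (Suc j)"
  shows "i \<le> N \<Longrightarrow> \<exists>j\<in>{i..N}. vf N r S i = pvf N r S j"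
proof (induction "N - i" arbitrary: i rule: less_induct)
  case (less i)
  show ?case
  proof (cases "N \<le> i")
    case True
    then have "i = N" using less by simp
    then show ?thesis by (auto simp: vf_ge wf_ge)
  next
    case False
    then have iN: "i < N" by simp
    have vi: "vf N r S i = max (vf N r S (Suc i)) (r i * S i + (1 - r i) * vf N r S (Suc i))"
      using iN by (rule vf_lt)
    have r: "0 \<le> r i" using rs by auto
    show ?thesis
    proof (cases "vf N r S (Suc i) \<le> S i")
      case True
      have e: "vf N r S (Suc i) = pvf N r S (Suc i)" using vf_wf_A[OF rs Smono iN True] .
      have "r i * vf N r S (Suc i) \<le> r i * S i" using True r by (rule mult_left_mono)
      then have "vf N r S i = r i * S i + (1 - r i) * pvf N r S (Suc i)"
        unfolding vi e[symmetric] by (simp add: algebra_simps max_def)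
      then have "vf N r S i = pvf N r S i" using iN by (simp add: wf_lt)
      then show ?thesis using iN by auto
    next
      case False
      have "r i * S i \<le> r i * vf N r S (Suc i)" using False r by (intro mult_left_mono) auto
      then have "vf N r S i = vf N r S (Suc i)" unfolding vi
        by (simp add: algebra_simps max_def)
      moreover have "\<exists>j\<in>{Suc i..N}. vf N r S (Suc i) = pvf N r S j"
      proof -
        have "N - Suc i < N - i" using iN by simp
        then show "\<exists>j\<in>{Suc i..N}. vf N r S (Suc i) = pvf N r S j" using less.hyps[of "Suc i"] iN by simp
      qed
      ultimately show ?thesis by force
    qed
  qed
qed


definition lrm :: "nat \<Rightarrow> nat list \<Rightarrow> bool" where
  "lrm i p \<longleftrightarrow> (\<forall>j < i - 1. p ! j < p ! (i - 1))"

definition Fge :: "strategy \<Rightarrow> nat \<Rightarrow> nat list \<Rightarrow> bool" where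
  "Fge s i \<sigma> \<longleftrightarrow> (\<forall>j\<in>{1..<i}. \<not> s (std (take j \<sigma>)))"

lemma stop_set: "finite ({i \<in> {1..<N}. s (std (take i p))} \<union> {N})" "({i \<in> {1..<N}. s (std (take i p))} \<union> {N}) \<noteq> {}"
  by auto

lemma stop_range: "1 \<le> N \<Longrightarrow> 1 \<le> stop_time N s p \<and> stop_time N s p \<le> N"
proof -
  assume N: "1 \<le> N"
  have "stop_time N s p \<in> {i \<in> {1..<N}. s (std (take i p))} \<union> {N}"
    unfolding stop_time_def by (rule Min_in[OF stop_set])
  moreover have "stop_time N s p \<le> N" unfolding stop_time_def by (rule Min_le) auto
  ultimately show ?thesis using N by auto
qed

lemma stop_ge_iff: "i \<le> N \<Longrightarrow> (i \<le> stop_time N s p) = (\<forall>j\<in>{1..<i}. \<not> s (std (take j p)))"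
proof -
  assume iN: "i \<le> N"
  have "(i \<le> stop_time N s p) = (\<forall>a\<in>{i \<in> {1..<N}. s (std (take i p))} \<union> {N}. i \<le> a)"
    unfolding stop_time_def by (rule Min_ge_iff[OF stop_set])
  also have "\<dots> = (\<forall>j\<in>{1..<i}. \<not> s (std (take j p)))" using iN by force
  finally show ?thesis .
qed

lemma stop_le: "j \<in> {1..<N} \<Longrightarrow> s (std (take j p)) \<Longrightarrow> stop_time N s p \<le> j"
  unfolding stop_time_def by (rule Min_le) auto

lemma stop_lt: "stop_time N s p < N \<Longrightarrow> s (std (take (stop_time N s p) p))"
proof -
  assume lt: "stop_time N s p < N"
  have "stop_time N s p \<in> {i \<in> {1..<N}. s (std (take i p))} \<union> {N}"
    unfolding stop_time_def by (rule Min_in[OF stop_set])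
  then show ?thesis using lt by auto
qed

lemma stop_ge_Fge:
  assumes p: "p \<in> Sym N" and i: "i \<le> N" "i - 1 \<le> k" "k \<le> N"
  shows "(i \<le> stop_time N s p) = Fge s i (std (take k p))"
proof -
  have lp: "length p = N" using Sym_length[OF p] .
  have "\<And>j. j \<in> {1..<i} \<Longrightarrow> std (take j (std (take k p))) = std (take j p)"
  proof -
    fix j assume "j \<in> {1..<i}"
    then have "j \<le> length (take k p)" "min j k = j" using i lp by auto
    then show "std (take j (std (take k p))) = std (take j p)" using std_take_std by simp
  qed
  then show ?thesis unfolding stop_ge_iff[OF i(1)] Fge_def by simp
qed

lemma lrm_std:
  assumes d: "distinct p" and i: "i \<le> length p"
  shows "lrm i p = lrm i (std (take i p))"
proof -
  have "\<And>j. j < i - 1 \<Longrightarrow> (std (take i p) ! j < std (take i p) ! (i - 1)) = (p ! j < p ! (i - 1))"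
  proof -
    fix j assume j: "j < i - 1"
    then have "j < length (take i p)" "i - 1 < length (take i p)" using i by auto
    then show "(std (take i p) ! j < std (take i p) ! (i - 1)) = (p ! j < p ! (i - 1))"
      using std_nth_less[of j "take i p" "i - 1"] j by simp
  qed
  then show ?thesis unfolding lrm_def by simp
qed

lemma lrm_split:
  assumes i: "1 \<le> i" "i \<le> length p"
  shows "lrm i p = (\<forall>y\<in>set (take (i - 1) p). y < drop (i - 1) p ! 0)"
proof -
  have "drop (i - 1) p ! 0 = p ! (i - 1)" using i by simp
  moreover have "set (take (i - 1) p) = nth p ` {0..<i - 1}" using nth_image[of "i - 1" p] i by simp
  ultimately show ?thesis unfolding lrm_def by auto
qed

lemma lrm_N:
  assumes p: "p \<in> Sym N" and i: "1 \<le> i" "i \<le> N"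
  shows "(p ! (i - 1) = N) = (lrm i p \<and> N \<in> set (take i p))"
proof -
  have lp: "length p = N" using Sym_length[OF p] .
  have dp: "distinct p" and sp: "set p = {1..N}" using p by (auto simp: Sym_iff)
  have le: "\<And>j. j < N \<Longrightarrow> p ! j \<le> N" using sp lp by (metis atLeastAtMost_iff nth_mem)
  show ?thesis
  proof
    assume e: "p ! (i - 1) = N"
    have "lrm i p" unfolding lrm_def
    proof (intro allI impI)
      fix j assume j: "j < i - 1"
      then have "p ! j \<noteq> p ! (i - 1)" using dp i lp by (simp add: nth_eq_iff_index_eq)
      moreover have "j < N" using j i by simp
      ultimately show "p ! j < p ! (i - 1)" using le[of j] e by simp
    qed
    moreover have "N \<in> set (take i p)"
    proof -
      have "i - 1 < length (take i p)" using i lp by simp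
      then have "take i p ! (i - 1) \<in> set (take i p)" by (rule nth_mem)
      moreover have "take i p ! (i - 1) = p ! (i - 1)" using i by simp
      ultimately show ?thesis using e by simp
    qed
    ultimately show "lrm i p \<and> N \<in> set (take i p)" by simp
  next
    assume "lrm i p \<and> N \<in> set (take i p)"
    then have l: "lrm i p" and n: "N \<in> set (take i p)" by auto
    from n obtain j where j: "j < i" "p ! j = N" using i lp by (auto simp: in_set_conv_nth)
    show "p ! (i - 1) = N"
    proof (cases "j = i - 1")
      case True then show ?thesis using j by simp
    next
      case False
      then have "j < i - 1" using j by simp
      then have "N < p ! (i - 1)" using l j unfolding lrm_def by auto
      moreover have "p ! (i - 1) \<le> N" using le i by simp
      ultimately show ?thesis by simp
    qed
  qed
qed

lemma last_lr: "length \<sigma> = i \<Longrightarrow> 1 \<le> i \<Longrightarrow> last_is_lr_max \<sigma> = lrm i \<sigma>"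
proof -
  assume l: "length \<sigma> = i" and i: "1 \<le> i"
  then have ne: "\<sigma> \<noteq> []" by auto
  show ?thesis unfolding last_is_lr_max_def lrm_def using ne l by (simp add: last_conv_nth[OF ne])
qed


lemma PS_nonneg: "0 < \<theta> \<Longrightarrow> 0 \<le> PS c \<theta> N P"
  unfolding PS_def by (intro sum_nonneg) simp

lemma PS_mono: "0 < \<theta> \<Longrightarrow> (\<And>x. x \<in> Sym N \<Longrightarrow> P x \<Longrightarrow> Q x) \<Longrightarrow> PS c \<theta> N P \<le> PS c \<theta> N Q"
  unfolding PS_if by (intro sum_mono) auto

lemma PS_split: "PS c \<theta> N P = PS c \<theta> N (\<lambda>x. P x \<and> Q x) + PS c \<theta> N (\<lambda>x. P x \<and> \<not> Q x)"
  unfolding PS_if sum.distrib[symmetric] by (rule sum.cong) auto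

lemma PS_False: "PS c \<theta> N (\<lambda>_. False) = 0"
  unfolding PS_def by simp

lemma idperm_Sym: "idperm N \<in> Sym N"
  by (auto simp: Sym_iff idperm_def)

lemma Z_pos: "0 < \<theta> \<Longrightarrow> 0 < PS c \<theta> N (\<lambda>_. True)"
  unfolding PS_def using idperm_Sym[of N] by (intro sum_pos) auto

lemma K1:
  assumes pe: "prefix_equivariant N c" and th: "0 < \<theta>" and i: "1 \<le> i" "i \<le> N"
  shows "PS c \<theta> N (\<lambda>p. i \<le> stop_time N s p \<and> lrm i p) * PS c \<theta> N (\<lambda>_. True)
     = PS c \<theta> N (\<lambda>p. i \<le> stop_time N s p) * PS c \<theta> N (lrm i)"
proof (cases "i = 1")
  case True
  have "PS c \<theta> N (\<lambda>p. i \<le> stop_time N s p \<and> lrm i p) = PS c \<theta> N (\<lambda>_. True)"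
    "PS c \<theta> N (\<lambda>p. i \<le> stop_time N s p) = PS c \<theta> N (\<lambda>_. True)"
    "PS c \<theta> N (lrm i) = PS c \<theta> N (\<lambda>_. True)"
    using stop_range[of N s] i True by (auto intro!: PS_cong simp: lrm_def)
  then show ?thesis by simp
next
  case False
  let ?k = "i - 1"
  have k: "1 \<le> ?k" "?k \<le> N" using False i by auto
  let ?F = "Fge s i"
  let ?H = "\<lambda>A d. \<forall>y\<in>A. y < d ! (0::nat)"
  have e1: "PS c \<theta> N (\<lambda>p. i \<le> stop_time N s p \<and> lrm i p) = PS c \<theta> N (\<lambda>x. ?F (std (take ?k x)) \<and> ?H (set (take ?k x)) (drop ?k x))"
  proof (rule PS_cong)
    fix x assume x: "x \<in> Sym N"
    show "(i \<le> stop_time N s x \<and> lrm i x) = (?F (std (take ?k x)) \<and> ?H (set (take ?k x)) (drop ?k x))"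
      using stop_ge_Fge[OF x, of i "i - 1" s] lrm_split[of i x] i Sym_length[OF x] by simp
  qed
  have e2: "PS c \<theta> N (\<lambda>p. i \<le> stop_time N s p) = PS c \<theta> N (\<lambda>x. ?F (std (take ?k x)))"
    by (rule PS_cong) (use i stop_ge_Fge[of _ N i "i - 1" s] in simp)
  have e3: "PS c \<theta> N (lrm i) = PS c \<theta> N (\<lambda>x. ?H (set (take ?k x)) (drop ?k x))"
    by (rule PS_cong) (use i lrm_split[of i] Sym_length in simp)
  show ?thesis unfolding e1 e2 e3 by (rule indep[OF pe k th])
qed

lemma K2:
  assumes pe: "prefix_equivariant N c" and th: "0 < \<theta>" and i: "1 \<le> i" "i \<le> N"
  shows "PS c \<theta> N (\<lambda>p. stop_time N s p = i \<and> p ! (i - 1) = N) * PS c \<theta> N (\<lambda>_. True)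
     = PS c \<theta> N (\<lambda>p. stop_time N s p = i \<and> lrm i p) * PS c \<theta> N (\<lambda>p. N \<in> set (take i p))"
proof -
  let ?F = "\<lambda>\<sigma>. Fge s i \<sigma> \<and> (i = N \<or> \<not> Fge s (Suc i) \<sigma>) \<and> lrm i \<sigma>"
  let ?H = "\<lambda>A (d::nat list). N \<in> A"
  have tau: "(stop_time N s p = i \<and> lrm i p) = ?F (std (take i p))" if p: "p \<in> Sym N" for p
  proof -
    have r: "stop_time N s p \<le> N" using stop_range[of N s p] i by simp
    have "(stop_time N s p = i) = (i \<le> stop_time N s p \<and> (i = N \<or> \<not> Suc i \<le> stop_time N s p))"
      using r by auto
    also have "\<dots> = (Fge s i (std (take i p)) \<and> (i = N \<or> \<not> Fge s (Suc i) (std (take i p))))"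
    proof (cases "i = N")
      case True then show ?thesis using stop_ge_Fge[OF p, of i i s] i by simp
    next
      case False then show ?thesis using stop_ge_Fge[OF p, of i i s] stop_ge_Fge[OF p, of "Suc i" i s] i by simp
    qed
    moreover have "lrm i p = lrm i (std (take i p))"
      using lrm_std[of p i] p i by (simp add: Sym_iff Sym_length)
    ultimately show ?thesis by simp
  qed
  have e1: "PS c \<theta> N (\<lambda>p. stop_time N s p = i \<and> p ! (i - 1) = N) = PS c \<theta> N (\<lambda>x. ?F (std (take i x)) \<and> ?H (set (take i x)) (drop i x))"
  proof (rule PS_cong)
    fix p assume p: "p \<in> Sym N"
    show "(stop_time N s p = i \<and> p ! (i - 1) = N) = (?F (std (take i p)) \<and> ?H (set (take i p)) (drop i p))"
      using tau[OF p] lrm_N[OF p i] by auto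
  qed
  have e2: "PS c \<theta> N (\<lambda>p. stop_time N s p = i \<and> lrm i p) = PS c \<theta> N (\<lambda>x. ?F (std (take i x)))"
    by (rule PS_cong) (rule tau)
  show ?thesis unfolding e1 e2 using indep[OF pe i th, of ?F ?H] by simp
qed

lemma K3:
  assumes N: "1 \<le> N"
  shows "PS c \<theta> N (wins N s) = (\<Sum>i=1..N. PS c \<theta> N (\<lambda>p. stop_time N s p = i \<and> p ! (i - 1) = N))"
proof -
  have "(\<Sum>i=1..N. PS c \<theta> N (\<lambda>p. stop_time N s p = i \<and> p ! (i - 1) = N))
     = (\<Sum>i=1..N. \<Sum>p\<in>Sym N. if stop_time N s p = i \<and> p ! (i - 1) = N then \<theta> ^ c p else 0)"
    by (simp add: PS_if)
  also have "\<dots> = (\<Sum>p\<in>Sym N. \<Sum>i=1..N. if stop_time N s p = i \<and> p ! (i - 1) = N then \<theta> ^ c p else 0)"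
    by (rule sum.swap)
  also have "\<dots> = (\<Sum>p\<in>Sym N. if wins N s p then \<theta> ^ c p else 0)"
  proof (rule sum.cong)
    fix p assume "p \<in> Sym N"
    have r: "stop_time N s p \<in> {1..N}" using stop_range[OF N, of s p] by simp
    have "(\<Sum>i=1..N. if stop_time N s p = i \<and> p ! (i - 1) = N then \<theta> ^ c p else 0)
       = (\<Sum>i=1..N. if i = stop_time N s p then (if wins N s p then \<theta> ^ c p else 0) else 0)"
      by (rule sum.cong) (auto simp: wins_def)
    also have "\<dots> = (if wins N s p then \<theta> ^ c p else 0)" using r by simp
    finally show "(\<Sum>i=1..N. if stop_time N s p = i \<and> p ! (i - 1) = N then \<theta> ^ c p else 0) = (if wins N s p then \<theta> ^ c p else 0)" .
  qed simp
  finally show ?thesis by (simp add: PS_if)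
qed

lemma win_prob_PS: "win_prob c \<theta> N s = PS c \<theta> N (wins N s) / PS c \<theta> N (\<lambda>_. True)"
  unfolding win_prob_def PS_def by simp


lemma pos_P1:
  assumes p: "p \<in> Sym N" and k: "k < N"
  shows "Suc k \<le> stop_time N (positional k) p"
proof -
  have lp: "length p = N" using Sym_length[OF p] .
  have "\<forall>j\<in>{1..<Suc k}. \<not> positional k (std (take j p))"
    using lp k by (auto simp: positional_def)
  then show ?thesis using stop_ge_iff[of "Suc k" N "positional k" p] k by simp
qed

lemma pos_P2:
  assumes p: "p \<in> Sym N" and j: "Suc k \<le> j" "j \<le> N"
    and ge: "j \<le> stop_time N (positional k) p" and l: "lrm j p"
  shows "stop_time N (positional k) p = j"
proof (cases "j < N")
  case True
  have lp: "length p = N" using Sym_length[OF p] .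
  have dp: "distinct p" using p by (simp add: Sym_iff)
  have "lrm j (std (take j p))" using lrm_std[OF dp, of j] l j lp by simp
  then have "last_is_lr_max (std (take j p))" using last_lr[of "std (take j p)" j] j lp by simp
  then have "positional k (std (take j p))" using j lp by (simp add: positional_def)
  then have "stop_time N (positional k) p \<le> j" using True j by (intro stop_le) auto
  then show ?thesis using ge by simp
next
  case False
  then show ?thesis using ge j stop_range[of N "positional k" p] by simp
qed

lemma pos_P3:
  assumes p: "p \<in> Sym N" and e: "stop_time N (positional k) p = j" and jN: "j < N"
  shows "lrm j p"
proof -
  have lp: "length p = N" using Sym_length[OF p] .
  have dp: "distinct p" using p by (simp add: Sym_iff)
  have j1: "1 \<le> j" using stop_range[of N "positional k" p] e jN by simp
  have "positional k (std (take j p))" using stop_lt[of N "positional k" p] e jN by simp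
  then have "last_is_lr_max (std (take j p))" by (simp add: positional_def)
  then have "lrm j (std (take j p))" using last_lr[of "std (take j p)" j] j1 jN lp by simp
  then show ?thesis using lrm_std[OF dp, of j] jN lp by simp
qed

context
  fixes c :: "nat list \<Rightarrow> nat" and \<theta> :: real and N :: nat
  assumes pe: "prefix_equivariant N c" and N1: "1 \<le> N" and th: "0 < \<theta>"
begin

definition "Z = PS c \<theta> N (\<lambda>_. True)"
definition "rr i = PS c \<theta> N (lrm i) / Z"
definition "SSv i = PS c \<theta> N (\<lambda>p. N \<in> set (take i p)) / Z"
definition "aa s i = PS c \<theta> N (\<lambda>p. stop_time N s p = i \<and> lrm i p) / Z"
definition "uu s i = PS c \<theta> N (\<lambda>p. i \<le> stop_time N s p) / Z"

lemma Zpos: "0 < Z" unfolding Z_def using Z_pos[OF th] .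

lemma PS_le_Z: "PS c \<theta> N P \<le> Z"
  unfolding Z_def by (rule PS_mono[OF th]) auto

lemma rs: "\<forall>j. 0 \<le> rr j \<and> rr j \<le> 1 \<and> 0 \<le> SSv j"
  using Zpos PS_le_Z PS_nonneg[OF th] by (auto simp: rr_def SSv_def)

lemma Smono: "\<forall>j. SSv j \<le> SSv (Suc j)"
proof
  fix j
  have "PS c \<theta> N (\<lambda>p. N \<in> set (take j p)) \<le> PS c \<theta> N (\<lambda>p. N \<in> set (take (Suc j) p))"
  proof (rule PS_mono[OF th])
    fix x assume "N \<in> set (take j x)"
    then show "N \<in> set (take (Suc j) x)" using set_take_subset_set_take[of j "Suc j" x] by auto
  qed
  then show "SSv j \<le> SSv (Suc j)" unfolding SSv_def using Zpos by (simp add: divide_right_mono)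
qed

lemma W_eq: "win_prob c \<theta> N s = (\<Sum>i=1..N. SSv i * aa s i)"
proof -
  have "win_prob c \<theta> N s = (\<Sum>i=1..N. PS c \<theta> N (\<lambda>p. stop_time N s p = i \<and> p ! (i - 1) = N)) / Z"
    unfolding win_prob_PS K3[OF N1] Z_def ..
  also have "\<dots> = (\<Sum>i=1..N. PS c \<theta> N (\<lambda>p. stop_time N s p = i \<and> p ! (i - 1) = N) / Z)"
    by (simp add: sum_divide_distrib)
  also have "\<dots> = (\<Sum>i=1..N. SSv i * aa s i)"
  proof (rule sum.cong)
    fix i assume i: "i \<in> {1..N}"
    have "PS c \<theta> N (\<lambda>p. stop_time N s p = i \<and> p ! (i - 1) = N) * Z
       = PS c \<theta> N (\<lambda>p. stop_time N s p = i \<and> lrm i p) * PS c \<theta> N (\<lambda>p. N \<in> set (take i p))"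
      using K2[OF pe th, of i s] i unfolding Z_def by simp
    then show "PS c \<theta> N (\<lambda>p. stop_time N s p = i \<and> p ! (i - 1) = N) / Z = SSv i * aa s i"
      unfolding SSv_def aa_def using Zpos by (simp add: field_simps)
  qed simp
  finally show ?thesis .
qed

lemma U_split: "PS c \<theta> N (\<lambda>p. j \<le> stop_time N s p)
   = PS c \<theta> N (\<lambda>p. Suc j \<le> stop_time N s p) + PS c \<theta> N (\<lambda>p. stop_time N s p = j)"
proof -
  have "PS c \<theta> N (\<lambda>p. j \<le> stop_time N s p)
     = PS c \<theta> N (\<lambda>p. j \<le> stop_time N s p \<and> Suc j \<le> stop_time N s p) + PS c \<theta> N (\<lambda>p. j \<le> stop_time N s p \<and> \<not> Suc j \<le> stop_time N s p)"
    by (rule PS_split)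
  also have "PS c \<theta> N (\<lambda>p. j \<le> stop_time N s p \<and> Suc j \<le> stop_time N s p) = PS c \<theta> N (\<lambda>p. Suc j \<le> stop_time N s p)"
    by (rule PS_cong) auto
  also have "PS c \<theta> N (\<lambda>p. j \<le> stop_time N s p \<and> \<not> Suc j \<le> stop_time N s p) = PS c \<theta> N (\<lambda>p. stop_time N s p = j)"
    by (rule PS_cong) auto
  finally show ?thesis .
qed

lemma u1: "uu s 1 = 1"
proof -
  have "PS c \<theta> N (\<lambda>p. 1 \<le> stop_time N s p) = Z"
    unfolding Z_def by (rule PS_cong) (use stop_range[OF N1] in auto)
  then show ?thesis unfolding uu_def using Zpos by simp
qed

lemma bound: "win_prob c \<theta> N s \<le> vf N rr SSv 1"
proof -
  have a0: "\<forall>j\<in>{1..N}. 0 \<le> aa s j" using Zpos PS_nonneg[OF th] by (auto simp: aa_def)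
  have u0: "\<forall>j\<in>{1..N}. 0 \<le> uu s j" using Zpos PS_nonneg[OF th] by (auto simp: uu_def)
  have ar: "\<forall>j\<in>{1..N}. aa s j \<le> rr j * uu s j"
  proof
    fix j assume j: "j \<in> {1..N}"
    have "PS c \<theta> N (\<lambda>p. stop_time N s p = j \<and> lrm j p) \<le> PS c \<theta> N (\<lambda>p. j \<le> stop_time N s p \<and> lrm j p)"
      by (rule PS_mono[OF th]) auto
    also have "\<dots> = PS c \<theta> N (\<lambda>p. j \<le> stop_time N s p) * PS c \<theta> N (lrm j) / Z"
      using K1[OF pe th, of j s] j Zpos unfolding Z_def by (simp add: field_simps)
    finally show "aa s j \<le> rr j * uu s j" unfolding aa_def rr_def uu_def using Zpos
      by (simp add: field_simps)
  qed
  have ua: "\<forall>j\<in>{1..<N}. uu s (Suc j) \<le> uu s j - aa s j"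
  proof
    fix j assume j: "j \<in> {1..<N}"
    have "PS c \<theta> N (\<lambda>p. stop_time N s p = j \<and> lrm j p) \<le> PS c \<theta> N (\<lambda>p. stop_time N s p = j)"
      by (rule PS_mono[OF th]) auto
    then show "uu s (Suc j) \<le> uu s j - aa s j" unfolding uu_def aa_def U_split[of j s] using Zpos
      by (simp add: field_simps)
  qed
  have "(\<Sum>i=1..N. SSv i * aa s i) \<le> uu s 1 * vf N rr SSv 1"
    by (rule vf_bound[OF rs a0 u0 ar ua]) (use N1 in auto)
  then show ?thesis using W_eq u1 by simp
qed

lemma pos_value:
  assumes k: "k < N"
  shows "win_prob c \<theta> N (positional k) = pvf N rr SSv (Suc k)"
proof -
  let ?s = "positional k"
  have ar: "\<forall>j\<in>{Suc k..N}. aa ?s j = rr j * uu ?s j"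
  proof
    fix j assume j: "j \<in> {Suc k..N}"
    have "PS c \<theta> N (\<lambda>p. stop_time N ?s p = j \<and> lrm j p) = PS c \<theta> N (\<lambda>p. j \<le> stop_time N ?s p \<and> lrm j p)"
    proof (rule PS_cong)
      fix p assume p: "p \<in> Sym N"
      show "(stop_time N ?s p = j \<and> lrm j p) = (j \<le> stop_time N ?s p \<and> lrm j p)"
        using pos_P2[OF p, of k j] j by auto
    qed
    also have "\<dots> = PS c \<theta> N (\<lambda>p. j \<le> stop_time N ?s p) * PS c \<theta> N (lrm j) / Z"
      using K1[OF pe th, of j ?s] j Zpos unfolding Z_def by (simp add: field_simps)
    finally show "aa ?s j = rr j * uu ?s j" unfolding aa_def rr_def uu_def using Zpos
      by (simp add: field_simps)
  qed
  have ua: "\<forall>j\<in>{Suc k..<N}. uu ?s (Suc j) = uu ?s j - aa ?s j"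
  proof
    fix j assume j: "j \<in> {Suc k..<N}"
    have "PS c \<theta> N (\<lambda>p. stop_time N ?s p = j \<and> lrm j p) = PS c \<theta> N (\<lambda>p. stop_time N ?s p = j)"
    proof (rule PS_cong)
      fix p assume p: "p \<in> Sym N"
      show "(stop_time N ?s p = j \<and> lrm j p) = (stop_time N ?s p = j)"
        using pos_P3[OF p, of k j] j by auto
    qed
    then show "uu ?s (Suc j) = uu ?s j - aa ?s j" unfolding uu_def aa_def U_split[of j ?s] using Zpos
      by (simp add: field_simps)
  qed
  have uk: "uu ?s (Suc k) = 1"
  proof -
    have "PS c \<theta> N (\<lambda>p. Suc k \<le> stop_time N ?s p) = Z"
      unfolding Z_def by (rule PS_cong) (use pos_P1 k in auto)
    then show ?thesis unfolding uu_def using Zpos by simp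
  qed
  have a0: "\<forall>j\<in>{1..N} - {Suc k..N}. SSv j * aa ?s j = 0"
  proof
    fix j assume j: "j \<in> {1..N} - {Suc k..N}"
    have "PS c \<theta> N (\<lambda>p. stop_time N ?s p = j \<and> lrm j p) = PS c \<theta> N (\<lambda>_. False)"
    proof (rule PS_cong)
      fix p assume p: "p \<in> Sym N"
      show "(stop_time N ?s p = j \<and> lrm j p) = False" using pos_P1[OF p k] j by auto
    qed
    then show "SSv j * aa ?s j = 0" unfolding aa_def PS_False by simp
  qed
  have "win_prob c \<theta> N ?s = (\<Sum>i=1..N. SSv i * aa ?s i)" by (rule W_eq)
  also have "\<dots> = (\<Sum>i=Suc k..N. SSv i * aa ?s i)"
    by (rule sum.mono_neutral_right) (use a0 in auto)
  also have "\<dots> = uu ?s (Suc k) * pvf N rr SSv (Suc k)"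
    by (rule wf_exact[OF ar ua]) (use k in auto)
  finally show ?thesis using uk by simp
qed

lemma main: "\<exists>k<N. \<forall>s :: strategy. win_prob c \<theta> N s \<le> win_prob c \<theta> N (positional k)"
proof -
  obtain j where j: "j \<in> {1..N}" "vf N rr SSv 1 = pvf N rr SSv j"
    using vf_wf_B[OF rs Smono, where i=1 and N=N] N1 by auto
  then have k: "j - 1 < N" and jj: "Suc (j - 1) = j" by auto
  have "\<forall>s :: strategy. win_prob c \<theta> N s \<le> win_prob c \<theta> N (positional (j - 1))"
    using bound pos_value[OF k] jj j(2) by simp
  then show ?thesis using k by blast
qed

end

theorem theorem3p8:
  fixes c :: "nat list \<Rightarrow> nat" and N :: nat and \<theta> :: real
  assumes "prefix_equivariant N c" and "1 \<le> N" and "0 < \<theta>"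
  shows "\<exists>k<N. \<forall>s :: strategy. win_prob c \<theta> N s \<le> win_prob c \<theta> N (positional k)"
  using main[OF assms] .

end
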